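(* For every $m\in\mathbb{N}\cup\{0\}$ and $(s,t)\in\mathbb{R}^2\setminus\{(0,0)\}$, $$\partial_s^m\Big(\frac{1}{\sqrt{s^2+t^2}}\Big)=\frac{P_m(s,t)}{(\sqrt{s^2+t^2})^{2m+1}},$$ where the polynomials $P_m$ are given, for $m\in\mathbb{N}\cup\{0\}$, by $$P_{2m}(s,t)=\sum_{i=0}^m a_{2m,2i}s^{2i}t^{2(m-i)},\qquad P_{2m+1}(s,t)=\sum_{i=0}^m a_{2m+1,2i+1}s^{2i+1}t^{2(m-i)},$$ with, for $0\le i\le m$, $$a_{2m,2i}=(-1)^{m-i}2^{2i-2m}(2m)!\,C_{2m}^{m-i}C_{m+i}^{m-i},\qquad a_{2m+1,2i+1}=(-1)^{m-i+1}2^{2i-2m}(2m+1)!\,C_{2m+1}^{m-i}C_{m+i+1}^{m-i}.$$ Moreover, for every $m\in\mathbb{N}=\{1,2,\dots\}$, $$\sum_{i=0}^m\frac{a_{2m,2i}}{C_{2m-1}^{m-i}}=-\frac{2}{2m+1}\sum_{i=0}^m\frac{a_{2m+1,2i+1}}{C_{2m}^{m-i}}=\frac{(2m)!}{2^{2m-1}},$$ $$(m+1)\sum_{i=0}^m\frac{a_{2m,2i}}{C_{2m}^{m-i}}=-\sum_{i=0}^m\frac{a_{2m+1,2i+1}}{C_{2m+1}^{m-i}}=\frac{(2m+2)!}{2^{2m+1}}.$$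
   Context: $C_n^k=\binom{n}{k}$ denotes the binomial coefficient, with the convention $C_0^0=1$. *)

theory Defs
  imports "HOL-Analysis.Analysis"
begin

definition a_even :: "nat \<Rightarrow> nat \<Rightarrow> real" where
  "a_even m i = (-1) ^ (m - i) * (2::real) powi (2 * int i - 2 * int m) * fact (2 * m)
     * real ((2 * m) choose (m - i)) * real ((m + i) choose (m - i))"

definition a_odd :: "nat \<Rightarrow> nat \<Rightarrow> real" where
  "a_odd m i = (-1) ^ (m - i + 1) * (2::real) powi (2 * int i - 2 * int m) * fact (2 * m + 1)
     * real ((2 * m + 1) choose (m - i)) * real ((m + i + 1) choose (m - i))"

definition P_even :: "nat \<Rightarrow> real \<Rightarrow> real \<Rightarrow> real" where
  "P_even m s t = (\<Sum>i = 0..m. a_even m i * s ^ (2 * i) * t ^ (2 * (m - i)))"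

definition P_odd :: "nat \<Rightarrow> real \<Rightarrow> real \<Rightarrow> real" where
  "P_odd m s t = (\<Sum>i = 0..m. a_odd m i * s ^ (2 * i + 1) * t ^ (2 * (m - i)))"

definition P :: "nat \<Rightarrow> real \<Rightarrow> real \<Rightarrow> real" where
  "P n s t = (if even n then P_even (n div 2) s t else P_odd (n div 2) s t)"

end

theory Submission
  imports Defs
begin

lemma pow2_neg: "i \<le> m \<Longrightarrow> (2::real) powi (2 * int i - 2 * int m) = 1 / 4 ^ (m - i)"
proof -
  assume "i \<le> m"
  then have e: "2 * int i - 2 * int m = - int (2 * (m - i))" by simp
  have f: "(2::real) ^ (2 * (m - i)) = 4 ^ (m - i)"
    by (simp only: power_mult) simp
  show ?thesis unfolding e power_int_minus power_int_of_nat f by (simp add: divide_inverse)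
qed

lemma alg1: "(M::real) \<noteq> 0 \<Longrightarrow> s * (1/q) * F * (F/(K*M)) * (M/(K*L)) = s*F^2/(q*K^2*L)"
  by (simp add: power2_eq_square)

lemma ae_closed: "i \<le> m \<Longrightarrow> a_even m i = (-1)^(m-i) * fact(2*m)^2 / (4^(m-i) * fact(m-i)^2 * fact(2*i))"
proof -
  assume h: "i \<le> m"
  have e1: "2*m - (m-i) = m+i" using h by simp
  have c1: "real ((2*m) choose (m-i)) = fact(2*m)/(fact(m-i)*fact(m+i))"
    using binomial_fact[of "m-i" "2*m", where 'a=real] h unfolding e1 by simp
  have e: "m + i - (m - i) = 2 * i" using h by simp
  have c2: "real ((m+i) choose (m-i)) = fact(m+i)/(fact(m-i)*fact(2*i))"
    using binomial_fact[of "m-i" "m+i", where 'a=real] h unfolding e by simp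
  show ?thesis unfolding a_even_def pow2_neg[OF h] c1 c2 by (rule alg1) simp
qed

lemma ao_closed: "i \<le> m \<Longrightarrow> a_odd m i = - ((-1)^(m-i) * fact(2*m+1)^2 / (4^(m-i) * fact(m-i)^2 * fact(2*i+1)))"
proof -
  assume h: "i \<le> m"
  have e1: "2*m+1 - (m-i) = m+i+1" using h by simp
  have c1: "real ((2*m+1) choose (m-i)) = fact(2*m+1)/(fact(m-i)*fact(m+i+1))"
    using binomial_fact[of "m-i" "2*m+1", where 'a=real] h unfolding e1 by simp
  have e: "m + i + 1 - (m - i) = 2 * i + 1" using h by simp
  have c2: "real ((m+i+1) choose (m-i)) = fact(m+i+1)/(fact(m-i)*fact(2*i+1))"
    using binomial_fact[of "m-i" "m+i+1", where 'a=real] h unfolding e by simp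
  have s: "(-1::real)^(m-i+1) = - ((-1)^(m-i))" by simp
  have "a_odd m i = (- ((-1)^(m-i))) * (1 / 4 ^ (m - i)) * fact (2 * m + 1) * (fact(2*m+1)/(fact(m-i)*fact(m+i+1))) * (fact(m+i+1)/(fact(m-i)*fact(2*i+1)))"
    unfolding a_odd_def s pow2_neg[OF h] c1 c2 ..
  also have "... = - ((-1)^(m-i) * fact(2*m+1)^2 / (4^(m-i) * fact(m-i)^2 * fact(2*i+1)))"
    by (subst alg1) simp_all
  finally show ?thesis .
qed

lemma rec1: assumes "j < m"
  shows "a_odd m j = (2*real j - 4*real m - 1) * a_even m j + 2*(real j+1) * a_even m (j+1)"
proof -
  obtain k where m: "m = j + Suc k" using assms less_imp_Suc_add by fastforce
  have d1: "m - j = Suc k" and d2: "m - (j+1) = k" using m by auto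
  define F where "F = (fact (2*m) :: real)"
  define K where "K = (fact k :: real)"
  define E where "E = (fact (2*j) :: real)"
  define p where "p = (4::real)^k"
  define s where "s = (-1::real)^k"
  have F1: "(fact (2*m+1) :: real) = (2*m+1) * F" unfolding F_def by simp
  have K1: "(fact (Suc k) :: real) = (k+1) * K" unfolding K_def by simp
  have E1: "(fact (2*j+1) :: real) = (2*j+1) * E" unfolding E_def by simp
  have E2: "(fact (2*(j+1)) :: real) = (2*j+2)*(2*j+1) * E"
  proof -
    have "2*(j+1) = Suc (Suc (2*j))" by simp
    then show ?thesis unfolding E_def by (simp add: algebra_simps)
  qed
  have A: "a_odd m j = s * ((2*m+1)*F)^2 / (4*p * ((k+1)*K)^2 * ((2*j+1)*E))"
    using ao_closed[of j m] assms unfolding d1 F1 K1 E1 by (simp add: p_def s_def)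
  have B: "a_even m j = - s * F^2 / (4*p * ((k+1)*K)^2 * E)"
    using ae_closed[of j m] assms unfolding d1 K1 by (simp add: p_def s_def F_def E_def)
  have C: "a_even m (j+1) = s * F^2 / (p * K^2 * ((2*j+2)*(2*j+1)*E))"
    using ae_closed[of "j+1" m] assms unfolding d2 E2 by (simp add: p_def s_def F_def K_def)
  have pos: "F \<noteq> 0" "K \<noteq> 0" "E \<noteq> 0" "p \<noteq> 0" unfolding F_def K_def E_def p_def by auto
  have rm: "real m = real j + real k + 1" using m by simp
  have nz: "real k + 1 \<noteq> 0" "2*real j+1 \<noteq> 0" "2*real j+2 \<noteq> 0" by linarith+
  have nz4: "2 + (6 * real j + 4 * (real j * real j)) \<noteq> 0"
  proof -
    have "0 < 2 + (6 * real j + 4 * (real j * real j))" by (auto intro!: add_pos_nonneg)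
    then show ?thesis by linarith
  qed
  show ?thesis unfolding A B C using pos nz nz4 by (simp add: rm divide_simps power2_eq_square) algebra
qed

lemma rec1m: "a_odd m m = - (2*real m + 1) * a_even m m"
proof -
  have A: "a_odd m m = - fact (2*m+1)" using ao_closed[of m m] by (simp add: power2_eq_square del: fact_Suc)
  have B: "a_even m m = fact (2*m)" using ae_closed[of m m] by (simp add: power2_eq_square)
  have "(fact (2*m+1)::real) = (2*m+1) * fact (2*m)" by (simp add: algebra_simps)
  then show ?thesis unfolding A B by (simp add: algebra_simps)
qed

lemma rec2: assumes "i < m"
  shows "a_even (m+1) (i+1) = (2*(real i+1) - 4*real m - 4) * a_odd m i + (2*(real i+1)+1) * a_odd m (i+1)"
proof -
  obtain k where m: "m = i + Suc k" using assms less_imp_Suc_add by fastforce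
  have d1: "m + 1 - (i+1) = Suc k" and d2: "m - (i+1) = k" and d3: "m - i = Suc k" using m by auto
  define F where "F = (fact (2*m+1) :: real)"
  define K where "K = (fact k :: real)"
  define E where "E = (fact (2*i+1) :: real)"
  define p where "p = (4::real)^k"
  define s where "s = (-1::real)^k"
  have F1: "(fact (2*(m+1)) :: real) = (2*m+2) * F"
  proof -
    have "2*(m+1) = Suc (2*m+1)" by simp
    then show ?thesis unfolding F_def by (simp add: algebra_simps)
  qed
  have K1: "(fact (Suc k) :: real) = (k+1) * K" unfolding K_def by simp
  have E1: "(fact (2*(i+1)) :: real) = (2*i+2) * E"
  proof -
    have "2*(i+1) = Suc (2*i+1)" by simp
    then show ?thesis unfolding E_def by (simp add: algebra_simps)
  qed
  have E2: "(fact (2*(i+1)+1) :: real) = (2*i+3)*(2*i+2) * E"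
  proof -
    have "2*(i+1)+1 = Suc (Suc (2*i+1))" by simp
    then show ?thesis unfolding E_def by (simp add: algebra_simps)
  qed
  have A: "a_even (m+1) (i+1) = - s * ((2*m+2)*F)^2 / (4*p * ((k+1)*K)^2 * ((2*i+2)*E))"
    using ae_closed[of "i+1" "m+1"] assms unfolding d1 F1 K1 E1 by (simp add: p_def s_def)
  have B: "a_odd m i = s * F^2 / (4*p * ((k+1)*K)^2 * E)"
    using ao_closed[of i m] assms unfolding d3 K1 by (simp add: p_def s_def F_def E_def)
  have C: "a_odd m (i+1) = - (s * F^2 / (p * K^2 * ((2*i+3)*(2*i+2)*E)))"
    using ao_closed[of "i+1" m] assms unfolding d2 E2 by (simp add: p_def s_def F_def K_def)
  have pos: "F \<noteq> 0" "K \<noteq> 0" "E \<noteq> 0" "p \<noteq> 0" unfolding F_def K_def E_def p_def by auto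
  have rm: "real m = real i + real k + 1" using m by simp
  have nz: "real k + 1 \<noteq> 0" "2*real i+3 \<noteq> 0" "2*real i+2 \<noteq> 0" by linarith+
  have nz4: "6 + (10 * real i + 4 * (real i * real i)) \<noteq> 0"
  proof -
    have "0 < 6 + (10 * real i + 4 * (real i * real i))" by (auto intro!: add_pos_nonneg)
    then show ?thesis by linarith
  qed
  show ?thesis unfolding A B C using pos nz nz4 by (simp add: rm divide_simps power2_eq_square) algebra
qed

lemma rec2_0: "a_even (m+1) 0 = a_odd m 0"
proof -
  define F where "F = (fact (2*m+1) :: real)"
  define K where "K = (fact m :: real)"
  have F1: "(fact (2*(m+1)) :: real) = (2*m+2) * F"
  proof -
    have "2*(m+1) = Suc (2*m+1)" by simp
    then show ?thesis unfolding F_def by (simp add: algebra_simps)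
  qed
  have K1: "(fact (Suc m) :: real) = (m+1) * K" unfolding K_def by (simp add: algebra_simps)
  have A: "a_even (m+1) 0 = (-1)^(m+1) * ((2*m+2)*F)^2 / (4^(m+1) * ((m+1)*K)^2)"
    using ae_closed[of 0 "m+1"] unfolding F1 by (simp add: K1 del: fact_Suc)
  have B: "a_odd m 0 = - ((-1)^m * F^2 / (4^m * K^2))"
    using ao_closed[of 0 m] by (simp add: F_def K_def del: fact_Suc)
  have nz: "F \<noteq> 0" "K \<noteq> 0" "real m + 1 \<noteq> 0" unfolding F_def K_def by auto
  show ?thesis unfolding A B using nz by (simp add: divide_simps power2_eq_square) algebra
qed

lemma rec2_top: "a_even (m+1) (m+1) = - (2*real m + 2) * a_odd m m"
proof -
  have F1: "(fact (2*(m+1)) :: real) = (2*m+2) * fact (2*m+1)"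
  proof -
    have e: "2*(m+1) = Suc (2*m+1)" by simp
    show ?thesis by (simp only: e fact_Suc) (simp add: algebra_simps)
  qed
  have A: "a_odd m m = - fact (2*m+1)" using ao_closed[of m m] by (simp add: power2_eq_square del: fact_Suc)
  have B: "a_even (m+1) (m+1) = fact (2*(m+1))" using ae_closed[of "m+1" "m+1"] by (simp add: power2_eq_square del: fact_Suc)
  show ?thesis unfolding A B F1 by (simp add: algebra_simps)
qed

definition dPe :: "nat \<Rightarrow> real \<Rightarrow> real \<Rightarrow> real" where
  "dPe m x t = (\<Sum>i = 0..m. a_even m i * (2 * real i * x ^ (2 * i - 1)) * t ^ (2 * (m - i)))"

definition dPo :: "nat \<Rightarrow> real \<Rightarrow> real \<Rightarrow> real" where
  "dPo m x t = (\<Sum>i = 0..m. a_odd m i * ((2 * real i + 1) * x ^ (2 * i)) * t ^ (2 * (m - i)))"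

lemma deriv_Pe: "((\<lambda>x. P_even m x t) has_real_derivative dPe m x t) (at x)"
  unfolding P_even_def dPe_def
proof (rule DERIV_sum)
  fix i assume "i \<in> {0..m}"
  have "((\<lambda>x. x ^ (2*i)) has_real_derivative real (2*i) * x ^ (2*i - 1)) (at x)" using DERIV_pow[of "2*i" x UNIV] by simp
  then show "((\<lambda>x. a_even m i * x ^ (2 * i) * t ^ (2 * (m - i))) has_real_derivative
          a_even m i * (2 * real i * x ^ (2 * i - 1)) * t ^ (2 * (m - i))) (at x)"
    by (auto intro!: DERIV_cmult DERIV_cmult_right)
qed

lemma deriv_Po: "((\<lambda>x. P_odd m x t) has_real_derivative dPo m x t) (at x)"
  unfolding P_odd_def dPo_def
proof (rule DERIV_sum)
  fix i assume "i \<in> {0..m}"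
  have "((\<lambda>x. x ^ (2*i+1)) has_real_derivative (2*real i+1) * x ^ (2*i)) (at x)" using DERIV_pow[of "2*i+1" x UNIV] by (simp add: add.commute)
  then show "((\<lambda>x. a_odd m i * x ^ (2 * i + 1) * t ^ (2 * (m - i))) has_real_derivative
          a_odd m i * ((2 * real i + 1) * x ^ (2 * i)) * t ^ (2 * (m - i))) (at x)"
    by (auto intro!: DERIV_cmult DERIV_cmult_right)
qed

lemma sum_split0: "(\<Sum>i = 0..m. h i) = h 0 + (\<Sum>j<m. h (Suc j))"
  by (induction m) (auto simp: add.assoc)

lemma sum_split_top: "(\<Sum>i = 0..(m::nat). h i) = (\<Sum>j<m. h j) + h m"
  by (induction m) auto

lemma poly_rec1: "(x^2 + t^2) * dPe m x t - (4 * real m + 1) * x * P_even m x t = P_odd m x t"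
proof -
  define X where "X j = x ^ (2*j+1) * t ^ (2*(m-j))" for j
  have R: "P_odd m x t = (\<Sum>j=0..m. (2*real j - 4*real m - 1) * a_even m j * X j)
             + (\<Sum>j<m. 2*(real j+1) * a_even m (j+1) * X j)"
  proof -
    have "P_odd m x t = (\<Sum>j=0..m. (2*real j - 4*real m - 1) * a_even m j * X j
             + (if j < m then 2*(real j+1) * a_even m (j+1) * X j else 0))"
      unfolding P_odd_def
    proof (rule sum.cong[OF refl])
      fix j assume j: "j \<in> {0..m}"
      show "a_odd m j * x ^ (2 * j + 1) * t ^ (2 * (m - j)) = (2*real j - 4*real m - 1) * a_even m j * X j
             + (if j < m then 2*(real j+1) * a_even m (j+1) * X j else 0)"
      proof (cases "j < m")
        case True
        then show ?thesis unfolding X_def rec1[OF True] by (simp add: algebra_simps)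
      next
        case False
        then have jm: "j = m" using j by auto
        show ?thesis unfolding X_def jm rec1m by (simp add: algebra_simps)
      qed
    qed
    also have "... = (\<Sum>j=0..m. (2*real j - 4*real m - 1) * a_even m j * X j)
             + (\<Sum>j=0..m. (if j < m then 2*(real j+1) * a_even m (j+1) * X j else 0))"
      by (rule sum.distrib)
    also have "(\<Sum>j=0..m. (if j < m then 2*(real j+1) * a_even m (j+1) * X j else 0))
        = (\<Sum>j<m. 2*(real j+1) * a_even m (j+1) * X j)"
      by (subst sum_split_top) simp
    finally show ?thesis .
  qed
  have L1: "x^2 * dPe m x t - (4 * real m + 1) * x * P_even m x t
      = (\<Sum>j=0..m. (2*real j - 4*real m - 1) * a_even m j * X j)"
    unfolding dPe_def P_even_def sum_distrib_left sum_subtractf[symmetric]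
  proof (rule sum.cong[OF refl])
    fix i assume i: "i \<in> {0..m}"
    have xp: "x^2 * (2 * real i * x ^ (2 * i - 1)) = 2 * real i * x ^ (2*i+1)"
    proof (cases i)
      case 0 then show ?thesis by simp
    next
      case (Suc i')
      then have e1: "2*i-1 = 2*i'+1" and e2: "2*i+1 = 2 + (2*i'+1)" by auto
      have p: "x^2 * x^(2*i-1) = x^(2*i+1)" unfolding e1 e2 power_add ..
      have "x^2 * (2 * real i * x ^ (2 * i - 1)) = 2 * real i * (x^2 * x^(2*i-1))" by (simp only: mult.left_commute)
      then show ?thesis unfolding p .
    qed
    have "x^2 * (a_even m i * (2 * real i * x ^ (2 * i - 1)) * t ^ (2 * (m - i)))
      = a_even m i * (x^2 * (2 * real i * x ^ (2 * i - 1))) * t ^ (2 * (m - i))" by simp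
    also have "... = 2 * real i * a_even m i * X i" unfolding xp X_def by simp
    finally have e1: "x^2 * (a_even m i * (2 * real i * x ^ (2 * i - 1)) * t ^ (2 * (m - i))) = 2 * real i * a_even m i * X i" .
    have e2: "(4 * real m + 1) * x * (a_even m i * x ^ (2 * i) * t ^ (2 * (m - i))) = (4 * real m + 1) * a_even m i * X i"
      unfolding X_def by (simp add: algebra_simps)
    show "x^2 * (a_even m i * (2 * real i * x ^ (2 * i - 1)) * t ^ (2 * (m - i))) -
          (4 * real m + 1) * x * (a_even m i * x ^ (2 * i) * t ^ (2 * (m - i))) =
          (2*real i - 4*real m - 1) * a_even m i * X i"
      unfolding e1 e2 by (simp add: algebra_simps)
  qed
  have L2: "t^2 * dPe m x t = (\<Sum>j<m. 2*(real j+1) * a_even m (j+1) * X j)"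
  proof -
    have "t^2 * dPe m x t = (\<Sum>i=0..m. t^2 * (a_even m i * (2*real i * x^(2*i-1)) * t^(2*(m-i))))"
      unfolding dPe_def sum_distrib_left ..
    also have "... = (\<Sum>j<m. t^2 * (a_even m (Suc j) * (2*real (Suc j) * x^(2*Suc j-1)) * t^(2*(m-Suc j))))"
      by (subst sum_split0) simp
    also have "... = (\<Sum>j<m. 2*(real j+1) * a_even m (j+1) * X j)"
  proof (rule sum.cong[OF refl])
    fix j assume j: "j \<in> {..<m}"
    then have e: "2 * (m - Suc j) + 2 = 2*(m-j)" by auto
    have tt: "t^2 * t ^ (2 * (m - Suc j)) = t ^ (2*(m-j))" unfolding e[symmetric] by (simp add: power_add power2_eq_square)
    have xx: "x ^ (2 * Suc j - 1) = x^(2*j+1)" by simp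
    have "t\<^sup>2 * (a_even m (Suc j) * (2 * real (Suc j) * x ^ (2 * Suc j - 1)) * t ^ (2 * (m - Suc j)))
      = a_even m (Suc j) * (2 * real (Suc j) * x ^ (2 * Suc j - 1)) * (t^2 * t ^ (2 * (m - Suc j)))"
      by (simp only: ac_simps)
    also have "... = 2 * (real j + 1) * a_even m (j + 1) * X j" unfolding tt xx X_def by simp
    finally show "t\<^sup>2 * (a_even m (Suc j) * (2 * real (Suc j) * x ^ (2 * Suc j - 1)) * t ^ (2 * (m - Suc j))) =
         2 * (real j + 1) * a_even m (j + 1) * X j" .
  qed
  finally show ?thesis .
  qed
  have "(x^2 + t^2) * dPe m x t - (4 * real m + 1) * x * P_even m x t
     = (x^2 * dPe m x t - (4 * real m + 1) * x * P_even m x t) + t^2 * dPe m x t"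
    by (simp add: algebra_simps)
  then show ?thesis unfolding L1 L2 R .
qed

lemma poly_rec2: "(x^2 + t^2) * dPo m x t - (4 * real m + 3) * x * P_odd m x t = P_even (m+1) x t"
proof -
  define Y where "Y j = x ^ (2*j+2) * t ^ (2*(m-j))" for j
  have R: "P_even (m+1) x t = a_odd m 0 * t^(2*m+2) + (\<Sum>j=0..m. (2*real j - 4*real m - 2) * a_odd m j * Y j)
             + (\<Sum>j<m. (2*real j+3) * a_odd m (j+1) * Y j)"
  proof -
    have "P_even (m+1) x t = a_even (m+1) 0 * x^(2*0) * t^(2*(m+1-0)) + (\<Sum>j<Suc m. a_even (m+1) (Suc j) * x^(2*Suc j) * t^(2*(m+1-Suc j)))"
      unfolding P_even_def by (subst sum_split0) simp
    also have "a_even (m+1) 0 * x^(2*0) * t^(2*(m+1-0)) = a_odd m 0 * t^(2*m+2)" using rec2_0[of m] by simp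
    also have "(\<Sum>j<Suc m. a_even (m+1) (Suc j) * x^(2*Suc j) * t^(2*(m+1-Suc j)))
       = (\<Sum>j=0..m. (2*real j - 4*real m - 2) * a_odd m j * Y j
             + (if j < m then (2*real j+3) * a_odd m (j+1) * Y j else 0))"
      unfolding lessThan_Suc_atMost atLeast0AtMost[symmetric]
    proof (rule sum.cong[OF refl])
      fix j assume j: "j \<in> {0..m}"
      have e: "x^(2*Suc j) * t^(2*(m+1-Suc j)) = Y j" unfolding Y_def by simp
      show "a_even (m+1) (Suc j) * x^(2*Suc j) * t^(2*(m+1-Suc j)) = (2*real j - 4*real m - 2) * a_odd m j * Y j
             + (if j < m then (2*real j+3) * a_odd m (j+1) * Y j else 0)"
      proof (cases "j < m")
        case True
        have "a_even (m+1) (Suc j) * x^(2*Suc j) * t^(2*(m+1-Suc j)) = a_even (m+1) (j+1) * Y j"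
          using e by simp
        then show ?thesis unfolding rec2[OF True] using True by (simp add: algebra_simps)
      next
        case False
        then have jm: "j = m" using j by auto
        have "a_even (m+1) (Suc j) * x^(2*Suc j) * t^(2*(m+1-Suc j)) = a_even (m+1) (m+1) * Y m"
          using e jm by simp
        then show ?thesis unfolding rec2_top jm by (simp add: algebra_simps)
      qed
    qed
    also have "... = (\<Sum>j=0..m. (2*real j - 4*real m - 2) * a_odd m j * Y j)
             + (\<Sum>j=0..m. (if j < m then (2*real j+3) * a_odd m (j+1) * Y j else 0))"
      by (rule sum.distrib)
    also have "(\<Sum>j=0..m. (if j < m then (2*real j+3) * a_odd m (j+1) * Y j else 0))
        = (\<Sum>j<m. (2*real j+3) * a_odd m (j+1) * Y j)"
      by (subst sum_split_top) simp
    finally show ?thesis by (simp add: algebra_simps)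
  qed
  have L1: "x^2 * dPo m x t - (4 * real m + 3) * x * P_odd m x t
      = (\<Sum>j=0..m. (2*real j - 4*real m - 2) * a_odd m j * Y j)"
    unfolding dPo_def P_odd_def sum_distrib_left sum_subtractf[symmetric]
  proof (rule sum.cong[OF refl])
    fix i assume i: "i \<in> {0..m}"
    have e1: "x^2 * (a_odd m i * ((2 * real i + 1) * x ^ (2 * i)) * t ^ (2 * (m - i))) = (2 * real i + 1) * a_odd m i * Y i"
      unfolding Y_def by (simp add: algebra_simps power_add power2_eq_square)
    have e2: "(4 * real m + 3) * x * (a_odd m i * x ^ (2 * i + 1) * t ^ (2 * (m - i))) = (4 * real m + 3) * a_odd m i * Y i"
      unfolding Y_def by (simp add: algebra_simps)
    show "x^2 * (a_odd m i * ((2 * real i + 1) * x ^ (2 * i)) * t ^ (2 * (m - i))) -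
          (4 * real m + 3) * x * (a_odd m i * x ^ (2 * i + 1) * t ^ (2 * (m - i))) =
          (2*real i - 4*real m - 2) * a_odd m i * Y i"
      unfolding e1 e2 by (simp add: algebra_simps)
  qed
  have L2: "t^2 * dPo m x t = a_odd m 0 * t^(2*m+2) + (\<Sum>j<m. (2*real j+3) * a_odd m (j+1) * Y j)"
  proof -
    have "t^2 * dPo m x t = (\<Sum>i=0..m. t^2 * (a_odd m i * ((2 * real i + 1) * x ^ (2 * i)) * t ^ (2 * (m - i))))"
      unfolding dPo_def sum_distrib_left ..
    also have "... = t^2 * (a_odd m 0 * ((2 * real 0 + 1) * x ^ (2 * 0)) * t ^ (2 * (m - 0)))
       + (\<Sum>j<m. t^2 * (a_odd m (Suc j) * ((2 * real (Suc j) + 1) * x ^ (2 * Suc j)) * t ^ (2 * (m - Suc j))))"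
      by (rule sum_split0)
    also have "t^2 * (a_odd m 0 * ((2 * real 0 + 1) * x ^ (2 * 0)) * t ^ (2 * (m - 0))) = a_odd m 0 * t^(2*m+2)"
      by (simp add: power_add power2_eq_square)
    also have "(\<Sum>j<m. t^2 * (a_odd m (Suc j) * ((2 * real (Suc j) + 1) * x ^ (2 * Suc j)) * t ^ (2 * (m - Suc j))))
        = (\<Sum>j<m. (2*real j+3) * a_odd m (j+1) * Y j)"
    proof (rule sum.cong[OF refl])
      fix j assume j: "j \<in> {..<m}"
      then have e: "2 * (m - Suc j) + 2 = 2*(m-j)" by auto
      have tt: "t^2 * t ^ (2 * (m - Suc j)) = t ^ (2*(m-j))" unfolding e[symmetric] by (simp add: power_add power2_eq_square)
      have "t^2 * (a_odd m (Suc j) * ((2 * real (Suc j) + 1) * x ^ (2 * Suc j)) * t ^ (2 * (m - Suc j)))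
        = a_odd m (Suc j) * ((2 * real (Suc j) + 1) * x ^ (2 * Suc j)) * (t^2 * t ^ (2 * (m - Suc j)))"
        by (simp only: ac_simps)
      also have "... = (2*real j+3) * a_odd m (j+1) * Y j" unfolding tt Y_def by (simp add: algebra_simps)
      finally show "t^2 * (a_odd m (Suc j) * ((2 * real (Suc j) + 1) * x ^ (2 * Suc j)) * t ^ (2 * (m - Suc j)))
        = (2*real j+3) * a_odd m (j+1) * Y j" .
    qed
    finally show ?thesis .
  qed
  have "(x^2 + t^2) * dPo m x t - (4 * real m + 3) * x * P_odd m x t
     = (x^2 * dPo m x t - (4 * real m + 3) * x * P_odd m x t) + t^2 * dPo m x t"
    by (simp add: algebra_simps)
  then show ?thesis unfolding L1 L2 R by simp
qed

definition dP :: "nat \<Rightarrow> real \<Rightarrow> real \<Rightarrow> real" where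
  "dP n x t = (if even n then dPe (n div 2) x t else dPo (n div 2) x t)"

lemma deriv_P: "((\<lambda>x. P n x t) has_real_derivative dP n x t) (at x)"
  unfolding P_def dP_def using deriv_Pe deriv_Po by (cases "even n") simp_all

lemma P_rec: "(x^2 + t^2) * dP n x t - (2 * real n + 1) * x * P n x t = P (Suc n) x t"
proof (cases "even n")
  case True
  then obtain m where n: "n = 2*m" by auto
  have "Suc n div 2 = m" "odd (Suc n)" using n by auto
  then show ?thesis unfolding P_def dP_def using True poly_rec1[of x t m] n by simp
next
  case False
  then obtain m where n: "n = 2*m+1" using oddE by blast
  have "Suc n div 2 = m+1" "even (Suc n)" "n div 2 = m" using n by auto
  then show ?thesis unfolding P_def dP_def using False poly_rec2[of x t m] n by (simp add: algebra_simps)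
qed

lemma alg_main:
  fixes r R d p x q k :: real
  assumes "r > 0" "R > 0" "q = r^2"
  shows "(d * (r * R) - p * ((2*k+1) * (x / r * R))) / ((r * R) * (r * R)) = (q * d - (2*k+1) * x * p) / (r^3 * R)"
  using assms by (simp add: field_simps power2_eq_square power3_eq_cube)

lemma deriv_F:
  assumes q: "x^2 + t^2 > 0"
  shows "((\<lambda>x. P n x t / sqrt (x^2 + t^2) ^ (2*n+1)) has_real_derivative
           P (Suc n) x t / sqrt (x^2 + t^2) ^ (2*Suc n+1)) (at x)"
proof -
  define r where "r = sqrt (x^2 + t^2)"
  have r0: "r > 0" unfolding r_def using q by simp
  have rq: "x^2 + t^2 = r^2" unfolding r_def using q by simp
  have dq: "((\<lambda>x. x^2 + t^2) has_real_derivative 2 * x) (at x)"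
    by (auto intro!: derivative_eq_intros)
  have dr: "((\<lambda>x. sqrt (x^2 + t^2)) has_real_derivative x / r) (at x)"
    using DERIV_chain2[OF DERIV_real_sqrt[OF q] dq] r0 unfolding r_def[symmetric]
    by (simp add: divide_simps)
  have dpow: "((\<lambda>x. sqrt (x^2 + t^2) ^ (2*n+1)) has_real_derivative (2*real n+1) * (x / r * r^(2*n))) (at x)"
    using DERIV_power[OF dr, of "2*n+1"] unfolding r_def[symmetric] by (simp add: add.commute)
  have dd: "((\<lambda>x. P n x t / sqrt (x^2 + t^2) ^ (2*n+1)) has_real_derivative
      (dP n x t * r^(2*n+1) - P n x t * ((2*real n+1) * (x / r * r^(2*n)))) / (r^(2*n+1) * r^(2*n+1))) (at x)"
    using DERIV_divide[OF deriv_P[of n t x] dpow] r0 unfolding r_def[symmetric] by simp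
  have R0: "r^(2*n) > 0" using r0 by simp
  have e1: "r^(2*n+1) = r * r^(2*n)" by simp
  have e2: "r^(2*Suc n+1) = r^3 * r^(2*n)"
  proof -
    have "2*Suc n+1 = 3 + 2*n" by simp
    then show ?thesis by (simp only: power_add)
  qed
  have "(dP n x t * r^(2*n+1) - P n x t * ((2*real n+1) * (x / r * r^(2*n)))) / (r^(2*n+1) * r^(2*n+1))
      = ((x^2+t^2) * dP n x t - (2*real n+1) * x * P n x t) / (r^3 * r^(2*n))"
    unfolding e1 by (rule alg_main[OF r0 R0 rq])
  also have "... = P (Suc n) x t / sqrt (x^2 + t^2) ^ (2*Suc n+1)"
    unfolding P_rec r_def[symmetric] e2 ..
  finally show ?thesis using dd by simp
qed

lemma deriv_iter:
  "\<forall>x. x^2 + t^2 > 0 \<longrightarrow> (deriv ^^ n) (\<lambda>x. 1 / sqrt (x^2 + t^2)) x = P n x t / sqrt (x^2 + t^2) ^ (2*n+1)"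
proof (induction n)
  case 0
  have "P 0 x t = 1" for x unfolding P_def P_even_def a_even_def by simp
  then show ?case by simp
next
  case (Suc n)
  show ?case
  proof (intro allI impI)
    fix x :: real assume q: "x^2 + t^2 > 0"
    define U where "U = {x::real. 0 < x^2 + t^2}"
    have U: "open U" unfolding U_def by (auto intro!: open_Collect_less continuous_intros)
    have "((deriv ^^ n) (\<lambda>x. 1 / sqrt (x^2 + t^2)) has_real_derivative
           P (Suc n) x t / sqrt (x^2 + t^2) ^ (2*Suc n+1)) (at x)"
      by (rule has_field_derivative_transform_within_open[OF deriv_F[OF q] U])
         (use q Suc.IH in \<open>auto simp: U_def\<close>)
    then show "(deriv ^^ Suc n) (\<lambda>x. 1 / sqrt (x^2 + t^2)) x = P (Suc n) x t / sqrt (x^2 + t^2) ^ (2*Suc n+1)"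
      by (simp add: DERIV_imp_deriv)
  qed
qed

lemma wz_step:
  fixes f :: "nat \<Rightarrow> nat \<Rightarrow> real" and G :: "nat \<Rightarrow> real"
  assumes "\<And>i. i \<le> m \<Longrightarrow> f (Suc m) i - f m i = G (Suc i) - G i" "G 0 = 0" "G (Suc m) = - f (Suc m) (Suc m)"
  shows "(\<Sum>i=0..Suc m. f (Suc m) i) = (\<Sum>i=0..m. f m i)"
proof -
  have "(\<Sum>i=0..m. f (Suc m) i - f m i) = (\<Sum>i=0..m. G (Suc i) - G i)"
    using assms(1) by (intro sum.cong) auto
  also have "... = G (Suc m) - G 0" by (rule sum_Suc_diff) simp
  finally have "(\<Sum>i=0..m. f (Suc m) i) - (\<Sum>i=0..m. f m i) = - f (Suc m) (Suc m)"
    using assms(2,3) by (simp add: sum_subtractf)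
  then show ?thesis by simp
qed

definition f1 :: "nat \<Rightarrow> nat \<Rightarrow> real" where
  "f1 m i = (-1)^(m-i) * 4^i * real m * fact (m+i-1) / (fact (m-i) * fact (2*i))"

lemma wz_from_ratios:
  fixes f :: "nat \<Rightarrow> nat \<Rightarrow> real" and R \<alpha> \<beta> :: "nat \<Rightarrow> real"
  assumes "\<And>i. i \<le> m \<Longrightarrow> f m i = \<alpha> i * f (Suc m) i"
    "\<And>i. i \<le> m \<Longrightarrow> f (Suc m) (Suc i) = \<beta> i * f (Suc m) i"
    "\<And>i. i \<le> m \<Longrightarrow> 1 - \<alpha> i = R (Suc i) * \<beta> i - R i"
    "R 0 = 0" "R (Suc m) = -1"
  shows "(\<Sum>i=0..Suc m. f (Suc m) i) = (\<Sum>i=0..m. f m i)"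
proof (rule wz_step[where G = "\<lambda>i. R i * f (Suc m) i"])
  fix i assume i: "i \<le> m"
  have "f (Suc m) i - f m i = (1 - \<alpha> i) * f (Suc m) i" using assms(1)[OF i] by (simp add: algebra_simps)
  also have "... = R (Suc i) * (\<beta> i * f (Suc m) i) - R i * f (Suc m) i" unfolding assms(3)[OF i] by (simp add: algebra_simps)
  finally show "f (Suc m) i - f m i = R (Suc i) * f (Suc m) (Suc i) - R i * f (Suc m) i" using assms(2)[OF i] by simp
qed (use assms in auto)

lemma f1_ratios:
  assumes "i \<le> m" "m \<ge> 1"
  shows "f1 m i = (- (real m * (real m + 1 - real i)) / ((real m + 1) * (real m + real i))) * f1 (Suc m) i"
    "f1 (Suc m) (Suc i) = (- 4 * (real m + 1 + real i) * (real m + 1 - real i) / ((2*real i+1)*(2*real i+2))) * f1 (Suc m) i"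
proof -
  obtain k where m: "m = i + k" using assms(1) le_Suc_ex by blast
  have d1: "Suc m - i = Suc k" "m - i = k" "Suc m - Suc i = k" using m by auto
  define s where "s = (-1::real)^k"
  define p where "p = (4::real)^i"
  define K where "K = (fact k :: real)"
  define E where "E = (fact (2*i) :: real)"
  define M where "M = (fact (m+i-1) :: real)"
  have M1: "(fact (Suc m + i - 1) :: real) = (m+i) * M"
  proof -
    obtain n where n: "m + i = Suc n" using assms(2) by (cases "m+i") auto
    then have e: "Suc m + i - 1 = Suc n" "m+i-1 = n" by auto
    have r: "real m + real i = real (Suc n)" using n by (metis of_nat_add)
    show ?thesis unfolding M_def e fact_Suc using r by simp
  qed
  have M2: "(fact (Suc m + Suc i - 1) :: real) = (m+i+1) * ((m+i) * M)"
  proof -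
    have "Suc m + Suc i - 1 = Suc (Suc m + i - 1)" using assms by auto
    then show ?thesis using M1 by (simp only: fact_Suc) simp
  qed
  have K1: "(fact (Suc k) :: real) = (k+1) * K" unfolding K_def by (simp add: algebra_simps)
  have E1: "(fact (2*Suc i) :: real) = (2*i+2)*(2*i+1) * E"
  proof -
    have "2*Suc i = Suc (Suc (2*i))" by simp
    then show ?thesis unfolding E_def by (simp add: algebra_simps)
  qed
  have A: "f1 (Suc m) i = - s * p * (real m+1) * ((real m+real i) * M) / ((real k+1) * K * E)"
    unfolding f1_def d1 M1 K1 by (simp add: s_def p_def E_def add.commute)
  have B: "f1 m i = s * p * real m * M / (K * E)"
    unfolding f1_def d1 by (simp add: s_def p_def E_def K_def M_def)
  have C: "f1 (Suc m) (Suc i) = s * (4 * p) * (real m+1) * ((real m+real i+1) * ((real m+real i) * M)) / (K * ((2*real i+2)*(2*real i+1) * E))"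
    unfolding f1_def d1 M2 E1 by (simp add: s_def p_def K_def algebra_simps)
  have pos: "K \<noteq> 0" "E \<noteq> 0" "p \<noteq> 0" "M \<noteq> 0" unfolding K_def E_def p_def M_def by auto
  have rm: "real m = real i + real k" using m by simp
  have nz: "real k + 1 \<noteq> 0" "2*real i+1 \<noteq> 0" "2*real i+2 \<noteq> 0" "real i + real k + 1 \<noteq> 0"
      "2 * real i + real k + 1 \<noteq> 0" "2*real i + real k \<noteq> 0" using assms m by auto
  have rk: "real m + 1 - real i = real k + 1" using m by simp
  have nzm: "real m + 1 \<noteq> 0" "real m + real i \<noteq> 0" using assms by auto
  show "f1 m i = (- (real m * (real m + 1 - real i)) / ((real m + 1) * (real m + real i))) * f1 (Suc m) i"
    unfolding A B rk using pos nz nzm by (simp add: divide_simps)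
  show "f1 (Suc m) (Suc i) = (- 4 * (real m + 1 + real i) * (real m + 1 - real i) / ((2*real i+1)*(2*real i+2))) * f1 (Suc m) i"
    unfolding A C rk using pos nz nzm by (simp add: divide_simps) algebra
qed

lemma f1_sum: "m \<ge> 1 \<Longrightarrow> (\<Sum>i=0..m. f1 m i) = 1"
proof (induction m rule: dec_induct)
  case base
  show ?case by (simp add: f1_def)
next
  case (step m)
  have "(\<Sum>i=0..Suc m. f1 (Suc m) i) = (\<Sum>i=0..m. f1 m i)"
  proof (rule wz_from_ratios[where R = "\<lambda>i. - (real i * (2*real i - 1)) / ((real m + 1) * (real m + real i))"])
    fix i assume i: "i \<le> m"
    show "f1 m i = (- (real m * (real m + 1 - real i)) / ((real m + 1) * (real m + real i))) * f1 (Suc m) i"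
      "f1 (Suc m) (Suc i) = (- 4 * (real m + 1 + real i) * (real m + 1 - real i) / ((2*real i+1)*(2*real i+2))) * f1 (Suc m) i"
      using f1_ratios[OF i step(1)] by auto
    have nz: "real m + 1 \<noteq> 0" "real m + real i \<noteq> 0" "real m + real i + 1 \<noteq> 0" "2*real i+1 \<noteq> 0" "2*real i+2 \<noteq> 0"
      using step(1) by auto
    show "1 - (- (real m * (real m + 1 - real i)) / ((real m + 1) * (real m + real i))) =
       (- (real (Suc i) * (2*real (Suc i) - 1)) / ((real m + 1) * (real m + real (Suc i)))) *
       (- 4 * (real m + 1 + real i) * (real m + 1 - real i) / ((2*real i+1)*(2*real i+2)))
       - (- (real i * (2*real i - 1)) / ((real m + 1) * (real m + real i)))"
      using nz by (simp add: divide_simps) algebra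
  next
    have nz: "real m + 1 \<noteq> 0" "2 * real m + 1 \<noteq> 0" by linarith+
    show "- (real (Suc m) * (2*real (Suc m) - 1)) / ((real m + 1) * (real m + real (Suc m))) = -1"
      using nz by (simp add: divide_simps) algebra
  qed simp
  then show ?case using step(3) by simp
qed


definition f2 :: "nat \<Rightarrow> nat \<Rightarrow> real" where
  "f2 m i = (-1)^(m-i) * (2 * real m + 1) * 4^i * fact (m+i) / (fact (m-i) * fact (2*i+1))"

definition f3 :: "nat \<Rightarrow> nat \<Rightarrow> real" where
  "f3 m i = (-1)^(m-i) * 4^i * fact (m+i) / ((2 * real m + 1) * fact (m-i) * fact (2*i))"

definition f4 :: "nat \<Rightarrow> nat \<Rightarrow> real" where
  "f4 m i = (-1)^(m-i) * 4^i * fact (m+i+1) / ((real m + 1) * fact (m-i) * fact (2*i+1))"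

lemma f2_ratios:
  assumes "i \<le> m"
  shows "f2 m i = (- ((2*real m+1) * (real m + 1 - real i)) / ((2*real m + 3) * (real m + real i + 1))) * f2 (Suc m) i"
    "f2 (Suc m) (Suc i) = (- 4 * (real m + real i + 2) * (real m + 1 - real i) / ((2*real i+2)*(2*real i+3))) * f2 (Suc m) i"
proof -
  obtain k where m: "m = i + k" using assms(1) le_Suc_ex by blast
  have d1: "Suc m - i = Suc k" "m - i = k" "Suc m - Suc i = k" using m by auto
  define s where "s = (-1::real)^k"
  define p where "p = (4::real)^i"
  define K where "K = (fact k :: real)"
  define E where "E = (fact (2*i+1) :: real)"
  define M where "M = (fact (m+i) :: real)"
  have M1: "(fact (Suc m + i) :: real) = (real m + real i + 1) * M"
    unfolding M_def by (simp add: algebra_simps)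
  have M2: "(fact (Suc m + Suc i) :: real) = (real m + real i + 2) * ((real m + real i + 1) * M)"
  proof -
    have "Suc m + Suc i = Suc (Suc m + i)" by simp
    then show ?thesis using M1 by (simp only: fact_Suc) (simp add: algebra_simps)
  qed
  have K1: "(fact (Suc k) :: real) = (k+1) * K" unfolding K_def by (simp add: algebra_simps)
  have E1: "(fact (2*Suc i+1) :: real) = (2*real i+3)*(2*real i+2) * E"
  proof -
    have "2*Suc i+1 = Suc (Suc (2*i+1))" by simp
    then show ?thesis unfolding E_def by (simp only: fact_Suc) (simp add: algebra_simps)
  qed
  have A: "f2 (Suc m) i = - s * (2*real m+3) * p * ((real m+real i+1) * M) / ((real k+1) * K * E)"
    unfolding f2_def d1 M1 K1 by (simp add: s_def p_def E_def algebra_simps)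
  have B: "f2 m i = s * (2*real m+1) * p * M / (K * E)"
    unfolding f2_def d1 by (simp add: s_def p_def E_def K_def M_def)
  have C: "f2 (Suc m) (Suc i) = s * (2*real m+3) * (4 * p) * ((real m + real i + 2) * ((real m + real i + 1) * M)) / (K * ((2*real i+3)*(2*real i+2) * E))"
    unfolding f2_def d1 M2 E1 by (simp add: s_def p_def K_def algebra_simps)
  have pos: "K \<noteq> 0" "E \<noteq> 0" "p \<noteq> 0" "M \<noteq> 0" unfolding K_def E_def p_def M_def by auto
  have nz: "real k + 1 \<noteq> 0" "2*real i+3 \<noteq> 0" "2*real i+2 \<noteq> 0" "real m + real i + 1 \<noteq> 0"
      "real m + real i + 2 \<noteq> 0" "2*real m + 3 \<noteq> 0" "2*real m + 1 \<noteq> 0" by linarith+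
  have rk: "real m + 1 - real i = real k + 1" using m by simp
  show "f2 m i = (- ((2*real m+1) * (real m + 1 - real i)) / ((2*real m + 3) * (real m + real i + 1))) * f2 (Suc m) i"
    unfolding A B rk using pos nz by (simp add: divide_simps)
  show "f2 (Suc m) (Suc i) = (- 4 * (real m + real i + 2) * (real m + 1 - real i) / ((2*real i+2)*(2*real i+3))) * f2 (Suc m) i"
    unfolding A C rk using pos nz by (simp add: divide_simps) algebra
qed

lemma f2_sum: "(\<Sum>i=0..m. f2 m i) = 1"
proof (induction m)
  case 0
  show ?case by (simp add: f2_def)
next
  case (Suc m)
  have "(\<Sum>i=0..Suc m. f2 (Suc m) i) = (\<Sum>i=0..m. f2 m i)"
  proof (rule wz_from_ratios[where R = "\<lambda>i. - (2 * real i * (2*real i + 1)) / ((2*real m + 3) * (real m + real i + 1))"])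
    fix i assume i: "i \<le> m"
    show "f2 m i = (- ((2*real m+1) * (real m + 1 - real i)) / ((2*real m + 3) * (real m + real i + 1))) * f2 (Suc m) i"
      "f2 (Suc m) (Suc i) = (- 4 * (real m + real i + 2) * (real m + 1 - real i) / ((2*real i+2)*(2*real i+3))) * f2 (Suc m) i"
      using f2_ratios[OF i] by auto
    have nz: "2*real m + 3 \<noteq> 0" "real m + real i + 1 \<noteq> 0" "real m + real i + 2 \<noteq> 0" "2*real i+3 \<noteq> 0" "2*real i+2 \<noteq> 0"
      by linarith+
    show "1 - (- ((2*real m+1) * (real m + 1 - real i)) / ((2*real m + 3) * (real m + real i + 1))) =
       (- (2 * real (Suc i) * (2*real (Suc i) + 1)) / ((2*real m + 3) * (real m + real (Suc i) + 1))) *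
       (- 4 * (real m + real i + 2) * (real m + 1 - real i) / ((2*real i+2)*(2*real i+3)))
       - (- (2 * real i * (2*real i + 1)) / ((2*real m + 3) * (real m + real i + 1)))"
      using nz by (simp add: divide_simps) algebra
  next
    have nz: "2*real m + 3 \<noteq> 0" "real m + 1 \<noteq> 0" by linarith+
    show "- (2 * real (Suc m) * (2*real (Suc m) + 1)) / ((2*real m + 3) * (real m + real (Suc m) + 1)) = -1"
      using nz by (simp add: divide_simps)
  qed simp
  then show ?case using Suc.IH by simp
qed

lemma f3_ratios:
  assumes "i \<le> m"
  shows "f3 m i = (- ((2*real m+3) * (real m + 1 - real i)) / ((2*real m + 1) * (real m + real i + 1))) * f3 (Suc m) i"
    "f3 (Suc m) (Suc i) = (- 4 * (real m + real i + 2) * (real m + 1 - real i) / ((2*real i+1)*(2*real i+2))) * f3 (Suc m) i"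
proof -
  obtain k where m: "m = i + k" using assms(1) le_Suc_ex by blast
  have d1: "Suc m - i = Suc k" "m - i = k" "Suc m - Suc i = k" using m by auto
  define s where "s = (-1::real)^k"
  define p where "p = (4::real)^i"
  define K where "K = (fact k :: real)"
  define E where "E = (fact (2*i) :: real)"
  define M where "M = (fact (m+i) :: real)"
  have M1: "(fact (Suc m + i) :: real) = (real m + real i + 1) * M"
    unfolding M_def by (simp add: algebra_simps)
  have M2: "(fact (Suc m + Suc i) :: real) = (real m + real i + 2) * ((real m + real i + 1) * M)"
  proof -
    have "Suc m + Suc i = Suc (Suc m + i)" by simp
    then show ?thesis using M1 by (simp only: fact_Suc) (simp add: algebra_simps)
  qed
  have K1: "(fact (Suc k) :: real) = (k+1) * K" unfolding K_def by (simp add: algebra_simps)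
  have E1: "(fact (2*Suc i) :: real) = (2*real i+2)*(2*real i+1) * E"
  proof -
    have "2*Suc i = Suc (Suc (2*i))" by simp
    then show ?thesis unfolding E_def by (simp only: fact_Suc) (simp add: algebra_simps)
  qed
  have A: "f3 (Suc m) i = - s * p * ((real m+real i+1) * M) / ((2*real m+3) * ((real k+1) * K) * E)"
    unfolding f3_def d1 M1 K1 by (simp add: s_def p_def E_def algebra_simps)
  have B: "f3 m i = s * p * M / ((2*real m+1) * K * E)"
    unfolding f3_def d1 by (simp add: s_def p_def E_def K_def M_def)
  have C: "f3 (Suc m) (Suc i) = s * (4 * p) * ((real m + real i + 2) * ((real m + real i + 1) * M)) / ((2*real m+3) * K * ((2*real i+2)*(2*real i+1) * E))"
    unfolding f3_def d1 M2 E1 by (simp add: s_def p_def K_def algebra_simps)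
  have pos: "K \<noteq> 0" "E \<noteq> 0" "p \<noteq> 0" "M \<noteq> 0" unfolding K_def E_def p_def M_def by auto
  have nz: "real k + 1 \<noteq> 0" "2*real i+1 \<noteq> 0" "2*real i+2 \<noteq> 0" "real m + real i + 1 \<noteq> 0"
      "real m + real i + 2 \<noteq> 0" "2*real m + 3 \<noteq> 0" "2*real m + 1 \<noteq> 0" by linarith+
  have rk: "real m + 1 - real i = real k + 1" using m by simp
  show "f3 m i = (- ((2*real m+3) * (real m + 1 - real i)) / ((2*real m + 1) * (real m + real i + 1))) * f3 (Suc m) i"
    unfolding A B rk using pos nz by (simp add: divide_simps)
  show "f3 (Suc m) (Suc i) = (- 4 * (real m + real i + 2) * (real m + 1 - real i) / ((2*real i+1)*(2*real i+2))) * f3 (Suc m) i"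
    unfolding A C rk using pos nz by (simp add: divide_simps) algebra
qed

lemma f3_sum: "(\<Sum>i=0..m. f3 m i) = 1"
proof (induction m)
  case 0
  show ?case by (simp add: f3_def)
next
  case (Suc m)
  have "(\<Sum>i=0..Suc m. f3 (Suc m) i) = (\<Sum>i=0..m. f3 m i)"
  proof (rule wz_from_ratios[where R = "\<lambda>i. - (2 * real i * (2*real i - 1)) / ((2*real m + 1) * (real m + real i + 1))"])
    fix i assume i: "i \<le> m"
    show "f3 m i = (- ((2*real m+3) * (real m + 1 - real i)) / ((2*real m + 1) * (real m + real i + 1))) * f3 (Suc m) i"
      "f3 (Suc m) (Suc i) = (- 4 * (real m + real i + 2) * (real m + 1 - real i) / ((2*real i+1)*(2*real i+2))) * f3 (Suc m) i"
      using f3_ratios[OF i] by auto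
    have nz: "2*real m + 1 \<noteq> 0" "real m + real i + 1 \<noteq> 0" "real m + real i + 2 \<noteq> 0" "2*real i+1 \<noteq> 0" "2*real i+2 \<noteq> 0"
      by linarith+
    show "1 - (- ((2*real m+3) * (real m + 1 - real i)) / ((2*real m + 1) * (real m + real i + 1))) =
       (- (2 * real (Suc i) * (2*real (Suc i) - 1)) / ((2*real m + 1) * (real m + real (Suc i) + 1))) *
       (- 4 * (real m + real i + 2) * (real m + 1 - real i) / ((2*real i+1)*(2*real i+2)))
       - (- (2 * real i * (2*real i - 1)) / ((2*real m + 1) * (real m + real i + 1)))"
      using nz by (simp add: divide_simps) algebra
  next
    have nz: "2*real m + 1 \<noteq> 0" "real m + 1 \<noteq> 0" by linarith+
    show "- (2 * real (Suc m) * (2*real (Suc m) - 1)) / ((2*real m + 1) * (real m + real (Suc m) + 1)) = -1"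
      using nz by (simp add: divide_simps)
  qed simp
  then show ?case using Suc.IH by simp
qed

lemma f4_ratios:
  assumes "i \<le> m"
  shows "f4 m i = (- ((real m+2) * (real m + 1 - real i)) / ((real m + 1) * (real m + real i + 2))) * f4 (Suc m) i"
    "f4 (Suc m) (Suc i) = (- 4 * (real m + real i + 3) * (real m + 1 - real i) / ((2*real i+2)*(2*real i+3))) * f4 (Suc m) i"
proof -
  obtain k where m: "m = i + k" using assms(1) le_Suc_ex by blast
  have d1: "Suc m - i = Suc k" "m - i = k" "Suc m - Suc i = k" using m by auto
  define s where "s = (-1::real)^k"
  define p where "p = (4::real)^i"
  define K where "K = (fact k :: real)"
  define E where "E = (fact (2*i+1) :: real)"
  define M where "M = (fact (m+i+1) :: real)"
  have M1: "(fact (Suc m + i + 1) :: real) = (real m + real i + 2) * M"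
  proof -
    have "Suc m + i + 1 = Suc (m+i+1)" by simp
    then show ?thesis unfolding M_def by (simp only: fact_Suc) (simp add: algebra_simps)
  qed
  have M2: "(fact (Suc m + Suc i + 1) :: real) = (real m + real i + 3) * ((real m + real i + 2) * M)"
  proof -
    have "Suc m + Suc i + 1 = Suc (Suc m + i + 1)" by simp
    then show ?thesis using M1 by (simp only: fact_Suc) (simp add: algebra_simps)
  qed
  have K1: "(fact (Suc k) :: real) = (k+1) * K" unfolding K_def by (simp add: algebra_simps)
  have E1: "(fact (2*Suc i+1) :: real) = (2*real i+3)*(2*real i+2) * E"
  proof -
    have "2*Suc i+1 = Suc (Suc (2*i+1))" by simp
    then show ?thesis unfolding E_def by (simp only: fact_Suc) (simp add: algebra_simps)
  qed
  have A: "f4 (Suc m) i = - s * p * ((real m+real i+2) * M) / ((real m+2) * ((real k+1) * K) * E)"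
    unfolding f4_def d1 M1 K1 by (simp add: s_def p_def E_def algebra_simps)
  have B: "f4 m i = s * p * M / ((real m+1) * K * E)"
    unfolding f4_def d1 by (simp add: s_def p_def E_def K_def M_def)
  have C: "f4 (Suc m) (Suc i) = s * (4 * p) * ((real m + real i + 3) * ((real m + real i + 2) * M)) / ((real m+2) * K * ((2*real i+3)*(2*real i+2) * E))"
    unfolding f4_def d1 M2 E1 by (simp add: s_def p_def K_def algebra_simps)
  have pos: "K \<noteq> 0" "E \<noteq> 0" "p \<noteq> 0" "M \<noteq> 0" unfolding K_def E_def p_def M_def by auto
  have nz: "real k + 1 \<noteq> 0" "2*real i+3 \<noteq> 0" "2*real i+2 \<noteq> 0" "real m + real i + 2 \<noteq> 0"
      "real m + real i + 3 \<noteq> 0" "real m + 2 \<noteq> 0" "real m + 1 \<noteq> 0" by linarith+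
  have rk: "real m + 1 - real i = real k + 1" using m by simp
  show "f4 m i = (- ((real m+2) * (real m + 1 - real i)) / ((real m + 1) * (real m + real i + 2))) * f4 (Suc m) i"
    unfolding A B rk using pos nz by (simp add: divide_simps)
  show "f4 (Suc m) (Suc i) = (- 4 * (real m + real i + 3) * (real m + 1 - real i) / ((2*real i+2)*(2*real i+3))) * f4 (Suc m) i"
    unfolding A C rk using pos nz by (simp add: divide_simps) algebra
qed

lemma f4_sum: "(\<Sum>i=0..m. f4 m i) = 1"
proof (induction m)
  case 0
  show ?case by (simp add: f4_def)
next
  case (Suc m)
  have "(\<Sum>i=0..Suc m. f4 (Suc m) i) = (\<Sum>i=0..m. f4 m i)"
  proof (rule wz_from_ratios[where R = "\<lambda>i. - (real i * (2*real i + 1)) / ((real m + 1) * (real m + real i + 2))"])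
    fix i assume i: "i \<le> m"
    show "f4 m i = (- ((real m+2) * (real m + 1 - real i)) / ((real m + 1) * (real m + real i + 2))) * f4 (Suc m) i"
      "f4 (Suc m) (Suc i) = (- 4 * (real m + real i + 3) * (real m + 1 - real i) / ((2*real i+2)*(2*real i+3))) * f4 (Suc m) i"
      using f4_ratios[OF i] by auto
    have nz: "real m + 1 \<noteq> 0" "real m + real i + 2 \<noteq> 0" "real m + real i + 3 \<noteq> 0" "2*real i+3 \<noteq> 0" "2*real i+2 \<noteq> 0"
      by linarith+
    show "1 - (- ((real m+2) * (real m + 1 - real i)) / ((real m + 1) * (real m + real i + 2))) =
       (- (real (Suc i) * (2*real (Suc i) + 1)) / ((real m + 1) * (real m + real (Suc i) + 2))) *
       (- 4 * (real m + real i + 3) * (real m + 1 - real i) / ((2*real i+2)*(2*real i+3)))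
       - (- (real i * (2*real i + 1)) / ((real m + 1) * (real m + real i + 2)))"
      using nz by (simp add: divide_simps) algebra
  next
    have nz: "2*real m + 3 \<noteq> 0" "real m + 1 \<noteq> 0" by linarith+
    show "- (real (Suc m) * (2*real (Suc m) + 1)) / ((real m + 1) * (real m + real (Suc m) + 2)) = -1"
      using nz by (simp add: divide_simps)
  qed simp
  then show ?case using Suc.IH by simp
qed


lemma pow_split: "i \<le> m \<Longrightarrow> (4::real)^m = 4^i * 4^(m-i)"
  by (simp add: power_add[symmetric])

lemma pow2m1: "m \<ge> 1 \<Longrightarrow> (2::real)^(2*m-1) = 4^m / 2"
proof -
  assume "m \<ge> 1"
  then have "2*m = Suc (2*m-1)" by simp
  then have "(2::real)^(2*m) = 2 * 2^(2*m-1)" by (metis power_Suc)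
  moreover have "(2::real)^(2*m) = 4^m" by (simp add: power_mult)
  ultimately show ?thesis by simp
qed

lemma T1: assumes "i \<le> m" "m \<ge> 1"
  shows "a_even m i / real ((2*m-1) choose (m-i)) = fact (2*m) / 2^(2*m-1) * f1 m i"
proof -
  have e: "2*m-1 - (m-i) = m+i-1" using assms by simp
  have c: "real ((2*m-1) choose (m-i)) = fact (2*m-1) / (fact (m-i) * fact (m+i-1))"
    using binomial_fact[of "m-i" "2*m-1", where 'a=real] assms unfolding e by simp
  have F: "(fact (2*m) :: real) = (2 * real m) * fact (2*m-1)"
  proof -
    have "2*m = Suc (2*m-1)" using assms by simp
    then have "(fact (2*m) :: real) = real (Suc (2*m-1)) * fact (2*m-1)" by (metis fact_Suc)
    then show ?thesis using assms by (simp add: of_nat_diff)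
  qed
  have pw: "(2::real)^(2*m-1) = 4^i * 4^(m-i) / 2" using pow2m1[OF assms(2)] pow_split[OF assms(1)] by simp
  have nz: "(fact (2*m-1)::real) \<noteq> 0" "(fact (m-i)::real) \<noteq> 0" "(fact (m+i-1)::real) \<noteq> 0" "(fact (2*i)::real) \<noteq> 0"
    "(4::real)^i \<noteq> 0" "(4::real)^(m-i) \<noteq> 0" "real m \<noteq> 0" using assms by auto
  show ?thesis unfolding ae_closed[OF assms(1)] c F pw f1_def using nz
    by (simp add: divide_simps power2_eq_square)
qed


lemma pow2m: "(2::real)^(2*m) = 4^m"
  by (simp add: power_mult)

lemma T2: assumes "i \<le> m"
  shows "a_odd m i / real ((2*m) choose (m-i)) = - (2*real m+1) * fact (2*m) / 2^(2*m) * f2 m i"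
proof -
  have e: "2*m - (m-i) = m+i" using assms by simp
  have c: "real ((2*m) choose (m-i)) = fact (2*m) / (fact (m-i) * fact (m+i))"
    using binomial_fact[of "m-i" "2*m", where 'a=real] assms unfolding e by simp
  have F: "(fact (2*m+1) :: real) = (2 * real m + 1) * fact (2*m)" by (simp add: algebra_simps)
  have pw: "(2::real)^(2*m) = 4^i * 4^(m-i)" using pow2m pow_split[OF assms(1)] by simp
  have nz: "(fact (2*m)::real) \<noteq> 0" "(fact (m-i)::real) \<noteq> 0" "(fact (m+i)::real) \<noteq> 0" "(fact (2*i+1)::real) \<noteq> 0"
    "(4::real)^i \<noteq> 0" "(4::real)^(m-i) \<noteq> 0" "2 * real m + 1 \<noteq> 0" by auto
  show ?thesis unfolding ao_closed[OF assms(1)] c F pw f2_def using nz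
    by (simp add: divide_simps power2_eq_square) algebra
qed

lemma T3: assumes "i \<le> m"
  shows "a_even m i / real ((2*m) choose (m-i)) = fact (2*m+1) / 4^m * f3 m i"
proof -
  have e: "2*m - (m-i) = m+i" using assms by simp
  have c: "real ((2*m) choose (m-i)) = fact (2*m) / (fact (m-i) * fact (m+i))"
    using binomial_fact[of "m-i" "2*m", where 'a=real] assms unfolding e by simp
  have F: "(fact (2*m+1) :: real) = (2 * real m + 1) * fact (2*m)" by (simp add: algebra_simps)
  have pw: "(4::real)^m = 4^i * 4^(m-i)" using pow_split[OF assms(1)] by simp
  have nz: "(fact (2*m)::real) \<noteq> 0" "(fact (m-i)::real) \<noteq> 0" "(fact (m+i)::real) \<noteq> 0" "(fact (2*i)::real) \<noteq> 0"
    "(4::real)^i \<noteq> 0" "(4::real)^(m-i) \<noteq> 0" "2 * real m + 1 \<noteq> 0" by auto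
  show ?thesis unfolding ae_closed[OF assms(1)] c F pw f3_def using nz
    by (simp add: divide_simps power2_eq_square)
qed

lemma T4: assumes "i \<le> m"
  shows "a_odd m i / real ((2*m+1) choose (m-i)) = - fact (2*m+2) / 2^(2*m+1) * f4 m i"
proof -
  have e: "2*m+1 - (m-i) = m+i+1" using assms by simp
  have c: "real ((2*m+1) choose (m-i)) = fact (2*m+1) / (fact (m-i) * fact (m+i+1))"
    using binomial_fact[of "m-i" "2*m+1", where 'a=real] assms unfolding e by simp
  have F: "(fact (2*m+2) :: real) = (2 * real m + 2) * fact (2*m+1)"
  proof -
    have e: "2*m+2 = Suc (2*m+1)" by simp
    show ?thesis by (simp only: e fact_Suc) (simp add: algebra_simps)
  qed
  have pw: "(2::real)^(2*m+1) = 2 * (4^i * 4^(m-i))" using pow2m[of m] pow_split[OF assms(1)] by simp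
  have nz: "(fact (2*m+1)::real) \<noteq> 0" "(fact (m-i)::real) \<noteq> 0" "(fact (m+i+1)::real) \<noteq> 0" "(fact (2*i+1)::real) \<noteq> 0"
    "(4::real)^i \<noteq> 0" "(4::real)^(m-i) \<noteq> 0" "real m + 1 \<noteq> 0" by auto
  show ?thesis unfolding ao_closed[OF assms(1)] c F pw f4_def using nz
    by (simp add: divide_simps power2_eq_square)
qed


lemma sums:
  assumes m: "m \<ge> 1"
  shows "(\<Sum>i = 0..m. a_even m i / real ((2 * m - 1) choose (m - i))) = fact (2*m) / 2^(2*m-1)"
    "(\<Sum>i = 0..m. a_odd m i / real ((2 * m) choose (m - i))) = - (2*real m+1) * fact (2*m) / 2^(2*m)"
    "(\<Sum>i = 0..m. a_even m i / real ((2 * m) choose (m - i))) = fact (2*m+1) / 4^m"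
    "(\<Sum>i = 0..m. a_odd m i / real ((2 * m + 1) choose (m - i))) = - fact (2*m+2) / 2^(2*m+1)"
proof -
  have "(\<Sum>i = 0..m. a_even m i / real ((2 * m - 1) choose (m - i))) = (\<Sum>i = 0..m. fact (2*m) / 2^(2*m-1) * f1 m i)"
    using T1 m by (intro sum.cong) auto
  also have "... = fact (2*m) / 2^(2*m-1)" unfolding sum_distrib_left[symmetric] f1_sum[OF m] by simp
  finally show "(\<Sum>i = 0..m. a_even m i / real ((2 * m - 1) choose (m - i))) = fact (2*m) / 2^(2*m-1)" .
  have "(\<Sum>i = 0..m. a_odd m i / real ((2 * m) choose (m - i))) = (\<Sum>i = 0..m. - (2*real m+1) * fact (2*m) / 2^(2*m) * f2 m i)"
    using T2 by (intro sum.cong) auto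
  also have "... = - (2*real m+1) * fact (2*m) / 2^(2*m)" unfolding sum_distrib_left[symmetric] f2_sum by simp
  finally show "(\<Sum>i = 0..m. a_odd m i / real ((2 * m) choose (m - i))) = - (2*real m+1) * fact (2*m) / 2^(2*m)" .
  have "(\<Sum>i = 0..m. a_even m i / real ((2 * m) choose (m - i))) = (\<Sum>i = 0..m. fact (2*m+1) / 4^m * f3 m i)"
    using T3 by (intro sum.cong) auto
  also have "... = fact (2*m+1) / 4^m" unfolding sum_distrib_left[symmetric] f3_sum by simp
  finally show "(\<Sum>i = 0..m. a_even m i / real ((2 * m) choose (m - i))) = fact (2*m+1) / 4^m" .
  have "(\<Sum>i = 0..m. a_odd m i / real ((2 * m + 1) choose (m - i))) = (\<Sum>i = 0..m. - fact (2*m+2) / 2^(2*m+1) * f4 m i)"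
    using T4 by (intro sum.cong) auto
  also have "... = - fact (2*m+2) / 2^(2*m+1)" unfolding sum_distrib_left[symmetric] f4_sum by simp
  finally show "(\<Sum>i = 0..m. a_odd m i / real ((2 * m + 1) choose (m - i))) = - fact (2*m+2) / 2^(2*m+1)" .
qed

theorem lemma2p3:
  shows "(\<forall>(m::nat) (s::real) (t::real). (s, t) \<noteq> (0, 0) \<longrightarrow>
            (deriv ^^ m) (\<lambda>x. 1 / sqrt (x\<^sup>2 + t\<^sup>2)) s
              = P m s t / (sqrt (s\<^sup>2 + t\<^sup>2)) ^ (2 * m + 1))
       \<and> (\<forall>m::nat. m \<ge> 1 \<longrightarrow>
            (\<Sum>i = 0..m. a_even m i / real ((2 * m - 1) choose (m - i)))
              = - (2 / (2 * real m + 1)) * (\<Sum>i = 0..m. a_odd m i / real ((2 * m) choose (m - i)))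
          \<and> - (2 / (2 * real m + 1)) * (\<Sum>i = 0..m. a_odd m i / real ((2 * m) choose (m - i)))
              = fact (2 * m) / 2 ^ (2 * m - 1)
          \<and> (real m + 1) * (\<Sum>i = 0..m. a_even m i / real ((2 * m) choose (m - i)))
              = - (\<Sum>i = 0..m. a_odd m i / real ((2 * m + 1) choose (m - i)))
          \<and> - (\<Sum>i = 0..m. a_odd m i / real ((2 * m + 1) choose (m - i)))
              = fact (2 * m + 2) / 2 ^ (2 * m + 1))"
proof (intro conjI allI impI)
  fix m :: nat and s t :: real
  assume "(s, t) \<noteq> (0, 0)"
  then have "s^2 + t^2 > 0" by (auto simp: sum_power2_gt_zero_iff)
  then show "(deriv ^^ m) (\<lambda>x. 1 / sqrt (x\<^sup>2 + t\<^sup>2)) s = P m s t / (sqrt (s\<^sup>2 + t\<^sup>2)) ^ (2 * m + 1)"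
    using deriv_iter[of t m] by blast
next
  fix m :: nat assume m: "m \<ge> 1"
  note S = sums[OF m]
  have e2: "- (2 / (2 * real m + 1)) * (\<Sum>i = 0..m. a_odd m i / real ((2 * m) choose (m - i))) = fact (2 * m) / 2 ^ (2 * m - 1)"
  proof -
    have nz: "2 * real m + 1 \<noteq> 0" by linarith
    have p: "(2::real)^(2*m) = 2 * 2^(2*m-1)" using pow2m1[OF m] pow2m[of m] by simp
    show ?thesis unfolding S(2) p using nz by (simp add: divide_simps) (simp add: algebra_simps)
  qed
  have e4: "- (\<Sum>i = 0..m. a_odd m i / real ((2 * m + 1) choose (m - i))) = fact (2 * m + 2) / 2 ^ (2 * m + 1)"
    unfolding S(4) by simp
  have e3: "(real m + 1) * (\<Sum>i = 0..m. a_even m i / real ((2 * m) choose (m - i))) = fact (2 * m + 2) / 2 ^ (2 * m + 1)"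
  proof -
    have F: "(fact (2*m+2) :: real) = (2 * real m + 2) * fact (2*m+1)"
    proof -
      have e: "2*m+2 = Suc (2*m+1)" by simp
      show ?thesis by (simp only: e fact_Suc) (simp add: algebra_simps)
    qed
    have p: "(2::real)^(2*m+1) = 2 * 4^m" using pow2m[of m] by simp
    show ?thesis unfolding S(3) F p by (simp add: divide_simps)
  qed
  show "(\<Sum>i = 0..m. a_even m i / real ((2 * m - 1) choose (m - i)))
              = - (2 / (2 * real m + 1)) * (\<Sum>i = 0..m. a_odd m i / real ((2 * m) choose (m - i)))"
    unfolding e2 S(1) ..
  show "- (2 / (2 * real m + 1)) * (\<Sum>i = 0..m. a_odd m i / real ((2 * m) choose (m - i)))
              = fact (2 * m) / 2 ^ (2 * m - 1)" by (rule e2)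
  show "(real m + 1) * (\<Sum>i = 0..m. a_even m i / real ((2 * m) choose (m - i)))
              = - (\<Sum>i = 0..m. a_odd m i / real ((2 * m + 1) choose (m - i)))" unfolding e3 e4 ..
  show "- (\<Sum>i = 0..m. a_odd m i / real ((2 * m + 1) choose (m - i)))
              = fact (2 * m + 2) / 2 ^ (2 * m + 1)" by (rule e4)
qed

end
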